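(* Let $K$ be a nilpotent group of class three, let $m\ge 2$ and let $y_1,\ldots,y_m$ be elements of $K$ which generate $K$ modulo $Z(K)$. Assume that $y_i^{2^{r_i}}\in Z(K)$ for each $i$, where $1\leq r_1\leq\cdots\leq r_{m-1}\leq r_m$ are integers. If there exist integers $0\leq\gamma_i<r_{m-1}$, $i=1,\ldots,m-1$, such that $[y_m,y_i]^{2^{\gamma_i}}$ commutes with both $y_i$ and $y_m$, then $y_m^{2^{r_{m-1}}}\in Z(K)$.
   Context: Commutators are $[x,y]=x^{-1}y^{-1}xy$, and are left-normed: $[x,y,z]=[[x,y],z]$. *)

theory Defs
  imports "HOL-Algebra.Algebra"
begin

definition comm :: "('a, 'b) monoid_scheme \<Rightarrow> 'a \<Rightarrow> 'a \<Rightarrow> 'a" where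
  "comm G x y = inv\<^bsub>G\<^esub> x \<otimes>\<^bsub>G\<^esub> inv\<^bsub>G\<^esub> y \<otimes>\<^bsub>G\<^esub> x \<otimes>\<^bsub>G\<^esub> y"

definition center :: "('a, 'b) monoid_scheme \<Rightarrow> 'a set" where
  "center G = {z \<in> carrier G. \<forall>g \<in> carrier G. z \<otimes>\<^bsub>G\<^esub> g = g \<otimes>\<^bsub>G\<^esub> z}"

text \<open>Lower central series: lcs G 0 = G (= gamma_1), lcs G (Suc n) = [lcs G n, G].\<close>
fun lcs :: "('a, 'b) monoid_scheme \<Rightarrow> nat \<Rightarrow> 'a set" where
  "lcs G 0 = carrier G"
| "lcs G (Suc n) = generate G {comm G x y | x y. x \<in> lcs G n \<and> y \<in> carrier G}"

definition nilpotent_of_class :: "('a, 'b) monoid_scheme \<Rightarrow> nat \<Rightarrow> bool" where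
  "nilpotent_of_class G c \<longleftrightarrow> lcs G c = {\<one>\<^bsub>G\<^esub>} \<and> lcs G (c - 1) \<noteq> {\<one>\<^bsub>G\<^esub>}"

end

theory Submission imports Defs begin
context group begin
lemma cc1: "x \<in> carrier G \<Longrightarrow> y \<in> carrier G \<Longrightarrow> x \<otimes> (inv x \<otimes> y) = y"
  by (simp add: m_assoc[symmetric])
lemma cc2: "x \<in> carrier G \<Longrightarrow> y \<in> carrier G \<Longrightarrow> inv x \<otimes> (x \<otimes> y) = y"
  by (simp add: m_assoc[symmetric])
lemma comm_closed[simp]: "x \<in> carrier G \<Longrightarrow> y \<in> carrier G \<Longrightarrow> comm G x y \<in> carrier G"
  by (simp add: comm_def)
lemma F1: "x \<in> carrier G \<Longrightarrow> y \<in> carrier G \<Longrightarrow> z \<in> carrier G \<Longrightarrow>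
  comm G (x \<otimes> y) z = comm G x z \<otimes> comm G (comm G x z) y \<otimes> comm G y z"
  by (simp add: comm_def m_assoc inv_mult_group cc1 cc2)
lemma F2: "x \<in> carrier G \<Longrightarrow> y \<in> carrier G \<Longrightarrow> z \<in> carrier G \<Longrightarrow>
  comm G x (y \<otimes> z) = comm G x z \<otimes> comm G x y \<otimes> comm G (comm G x y) z"
  by (simp add: comm_def m_assoc inv_mult_group cc1 cc2)
lemma comm1: "x \<in> carrier G \<Longrightarrow> y \<in> carrier G \<Longrightarrow> comm G x y = \<one> \<longleftrightarrow> x \<otimes> y = y \<otimes> x"
proof -
  assume a: "x \<in> carrier G" "y \<in> carrier G"
  have "comm G x y = inv (y \<otimes> x) \<otimes> (x \<otimes> y)" using a by (simp add: comm_def m_assoc inv_mult_group)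
  also have "\<dots> = \<one> \<longleftrightarrow> x \<otimes> y = y \<otimes> x" using a
    by (metis inv_closed inv_equality inv_inv m_closed r_inv)
  finally show ?thesis .
qed
lemma pow_commute: "x \<in> carrier G \<Longrightarrow> y \<in> carrier G \<Longrightarrow> x \<otimes> y = y \<otimes> x \<Longrightarrow> x [^] (n::nat) \<otimes> y = y \<otimes> x [^] n"
proof (induction n)
  case (Suc n)
  have "x [^] Suc n \<otimes> y = x [^] n \<otimes> (x \<otimes> y)" using Suc.prems by (simp add: m_assoc)
  also have "\<dots> = (x [^] n \<otimes> y) \<otimes> x" using Suc.prems by (simp add: m_assoc)
  also have "\<dots> = y \<otimes> x [^] Suc n" using Suc by (simp add: m_assoc)
  finally show ?case .
qed simp
lemma pow_dvd_one: "x \<in> carrier G \<Longrightarrow> x [^] (k::nat) = \<one> \<Longrightarrow> k dvd j \<Longrightarrow> x [^] j = \<one>"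
  by (metis dvdE nat_pow_one nat_pow_pow)
end

lemma T_Suc: "Suc n * n div 2 = n + n * (n - 1) div 2"
  by (cases n) (simp_all add: algebra_simps)

locale class3 = group +
  assumes H: "\<And>x y z w. x \<in> carrier G \<Longrightarrow> y \<in> carrier G \<Longrightarrow> z \<in> carrier G \<Longrightarrow> w \<in> carrier G
     \<Longrightarrow> comm G (comm G (comm G x y) z) w = \<one>"
begin
lemma central: "x \<in> carrier G \<Longrightarrow> y \<in> carrier G \<Longrightarrow> z \<in> carrier G \<Longrightarrow> w \<in> carrier G
     \<Longrightarrow> comm G (comm G x y) z \<otimes> w = w \<otimes> comm G (comm G x y) z"
  using H comm1 by simp

lemma A: assumes "p \<in> carrier G" "q \<in> carrier G" "g \<in> carrier G"
  shows "comm G (comm G p q) (g [^] (n::nat)) = (comm G (comm G p q) g) [^] n"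
proof (induction n)
  case 0 show ?case using assms by (simp add: comm_def m_assoc)
next
  case (Suc n)
  have "comm G (comm G p q) (g [^] Suc n) = comm G (comm G p q) (g [^] n \<otimes> g)" by simp
  also have "\<dots> = comm G (comm G p q) g \<otimes> comm G (comm G p q) (g [^] n)"
    using assms F2[of "comm G p q" "g [^] n" g] H by simp
  also have "\<dots> = (comm G (comm G p q) g) [^] Suc n" using Suc assms by (metis nat_pow_Suc nat_pow_Suc2 comm_closed nat_pow_closed)
  finally show ?case .
qed

lemma D: assumes "p \<in> carrier G" "q \<in> carrier G" "g \<in> carrier G"
  shows "comm G ((comm G p q) [^] (n::nat)) g = (comm G (comm G p q) g) [^] n"
proof (induction n)
  case 0 show ?case using assms by (simp add: comm_def m_assoc)
next
  case (Suc n)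
  have "comm G ((comm G p q) [^] Suc n) g = comm G (comm G p q \<otimes> (comm G p q) [^] n) g"
    using assms by (metis nat_pow_Suc nat_pow_Suc2 comm_closed nat_pow_closed)
  also have "\<dots> = comm G (comm G p q) g \<otimes> comm G ((comm G p q) [^] n) g"
    using assms F1[of "comm G p q" "(comm G p q) [^] n" g] H by simp
  also have "\<dots> = (comm G (comm G p q) g) [^] Suc n" using Suc assms by (metis nat_pow_Suc nat_pow_Suc2 comm_closed nat_pow_closed)
  finally show ?case .
qed

lemma B: assumes "p \<in> carrier G" "g \<in> carrier G"
  shows "comm G (g [^] (n::nat)) p = (comm G g p) [^] n \<otimes> (comm G (comm G g p) g) [^] (n * (n - 1) div 2)"
proof (induction n)
  case 0 show ?case using assms by (simp add: comm_def m_assoc)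
next
  case (Suc n)
  let ?c = "comm G g p" let ?e = "comm G ?c g"
  have "comm G (g [^] Suc n) p = comm G (g \<otimes> g [^] n) p" using assms by (metis nat_pow_Suc nat_pow_Suc2 comm_closed nat_pow_closed)
  also have "\<dots> = ?c \<otimes> comm G ?c (g [^] n) \<otimes> comm G (g [^] n) p"
    using assms F1 by simp
  also have "\<dots> = ?c \<otimes> (comm G ?c (g [^] n) \<otimes> ?c [^] n) \<otimes> ?e [^] (n * (n - 1) div 2)"
    using assms Suc by (simp add: m_assoc)
  also have "\<dots> = ?c \<otimes> (?c [^] n \<otimes> comm G ?c (g [^] n)) \<otimes> ?e [^] (n * (n - 1) div 2)"
    using assms central by simp
  also have "\<dots> = (?c \<otimes> ?c [^] n) \<otimes> (?e [^] n \<otimes> ?e [^] (n * (n - 1) div 2))"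
    using assms A by (simp add: m_assoc)
  also have "\<dots> = ?c [^] Suc n \<otimes> ?e [^] (n + n * (n - 1) div 2)"
    using assms by (metis nat_pow_Suc2 nat_pow_mult comm_closed)
  also have "\<dots> = ?c [^] Suc n \<otimes> ?e [^] (Suc n * (Suc n - 1) div 2)"
    by (simp only: T_Suc diff_Suc_1)
  finally show ?case .
qed

lemma C: assumes "p \<in> carrier G" "g \<in> carrier G"
  shows "comm G p (g [^] (n::nat)) = (comm G p g) [^] n \<otimes> (comm G (comm G p g) g) [^] (n * (n - 1) div 2)"
proof (induction n)
  case 0 show ?case using assms by (simp add: comm_def m_assoc)
next
  case (Suc n)
  let ?c = "comm G p g" let ?f = "comm G ?c g"
  have "comm G p (g [^] Suc n) = comm G p (g \<otimes> g [^] n)" using assms by (metis nat_pow_Suc nat_pow_Suc2 comm_closed nat_pow_closed)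
  also have "\<dots> = comm G p (g [^] n) \<otimes> ?c \<otimes> comm G ?c (g [^] n)"
    using assms F2 by simp
  also have "\<dots> = ?c [^] n \<otimes> (?f [^] (n * (n - 1) div 2) \<otimes> ?c) \<otimes> ?f [^] n"
    using assms Suc A by (simp add: m_assoc)
  also have "\<dots> = ?c [^] n \<otimes> (?c \<otimes> ?f [^] (n * (n - 1) div 2)) \<otimes> ?f [^] n"
    using assms central pow_commute by simp
  also have "\<dots> = (?c [^] n \<otimes> ?c) \<otimes> (?f [^] n \<otimes> ?f [^] (n * (n - 1) div 2))"
    using assms by (simp add: m_assoc nat_pow_comm)
  also have "\<dots> = ?c [^] Suc n \<otimes> ?f [^] (n + n * (n - 1) div 2)"
    using assms by (metis nat_pow_Suc nat_pow_mult comm_closed)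
  also have "\<dots> = ?c [^] Suc n \<otimes> ?f [^] (Suc n * (Suc n - 1) div 2)"
    by (simp only: T_Suc diff_Suc_1)
  finally show ?case .
qed

lemma pow_2_T: "1 \<le> R \<Longrightarrow> (2::nat) ^ R * (2 ^ R - 1) div 2 = 2 ^ (R - 1) * (2 ^ R - 1)"
proof -
  assume "1 \<le> R"
  then have "(2::nat) ^ R = 2 * 2 ^ (R - 1)" by (metis Suc_diff_le diff_Suc_1 power_Suc)
  then show ?thesis by simp
qed

lemma key: assumes a: "a \<in> carrier G" and b: "b \<in> carrier G"
  and cen: "\<forall>x\<in>carrier G. a [^] ((2::nat) ^ s) \<otimes> x = x \<otimes> a [^] ((2::nat) ^ s)"
  and s: "1 \<le> s" "s \<le> R" and g: "g < R"
  and ca: "comm G b a [^] ((2::nat) ^ g) \<otimes> a = a \<otimes> comm G b a [^] ((2::nat) ^ g)"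
  and cb: "comm G b a [^] ((2::nat) ^ g) \<otimes> b = b \<otimes> comm G b a [^] ((2::nat) ^ g)"
  shows "b [^] ((2::nat) ^ R) \<otimes> a = a \<otimes> b [^] ((2::nat) ^ R)"
proof -
  define c where "c = comm G b a"
  define e where "e = comm G c b"
  define f where "f = comm G c a"
  define N where "N = (2::nat) ^ R"
  define M where "M = (2::nat) ^ s"
  have cc: "c \<in> carrier G" "e \<in> carrier G" "f \<in> carrier G" using a b by (auto simp: c_def e_def f_def)
  have "comm G (c [^] ((2::nat)^g)) b = \<one>"
    using comm1[of "c [^] ((2::nat)^g)" b] cb cc b unfolding c_def by simp
  then have e1: "e [^] ((2::nat) ^ g) = \<one>"
    using D[OF b a b, of "2 ^ g"] unfolding e_def c_def by simp
  have "comm G (c [^] ((2::nat)^g)) a = \<one>"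
    using comm1[of "c [^] ((2::nat)^g)" a] ca cc a unfolding c_def by simp
  then have f1: "f [^] ((2::nat) ^ g) = \<one>"
    using D[OF b a a, of "2 ^ g"] unfolding f_def c_def by simp
  have gR: "(2::nat) ^ g dvd 2 ^ (R - 1)" using g by (simp add: le_imp_power_dvd)
  have "comm G (b [^] N) a = c [^] N \<otimes> e [^] (N * (N - 1) div 2)"
    using B[OF a b] unfolding c_def e_def by simp
  also have "e [^] (N * (N - 1) div 2) = \<one>"
    using pow_dvd_one[OF cc(2) e1] gR pow_2_T[of R] s unfolding N_def by simp
  finally have 1: "comm G (b [^] N) a = c [^] N" using cc by simp
  have "\<one> = comm G b (a [^] M)"
    using comm1[of b "a [^] M"] cen b a unfolding M_def by simp
  also have "\<dots> = c [^] M \<otimes> f [^] (M * (M - 1) div 2)"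
    using C[OF b a] unfolding c_def f_def by simp
  finally have "inv (f [^] (M * (M - 1) div 2)) = c [^] M"
    using cc by (metis inv_equality nat_pow_closed)
  then have "c [^] N = inv (f [^] (M * (M - 1) div 2)) [^] ((2::nat) ^ (R - s))"
    using cc s unfolding N_def M_def by (simp add: nat_pow_pow power_add[symmetric])
  also have "\<dots> = inv (f [^] (M * (M - 1) div 2 * 2 ^ (R - s)))"
    using cc by (simp add: nat_pow_inv nat_pow_pow)
  also have "M * (M - 1) div 2 * 2 ^ (R - s) = 2 ^ (R - 1) * (M - 1)"
    using pow_2_T[of s] s unfolding M_def by (simp add: power_add[symmetric])
  also have "f [^] (2 ^ (R - 1) * (M - 1)) = \<one>"
    using pow_dvd_one[OF cc(3) f1] gR by simp
  finally have "comm G (b [^] N) a = \<one>" using 1 by simp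
  then show ?thesis using comm1 a b unfolding N_def by simp
qed
end

lemma (in group) gen_commute:
  assumes "z \<in> carrier G" "S \<subseteq> carrier G" "\<forall>s\<in>S. z \<otimes> s = s \<otimes> z" "h \<in> generate G S"
  shows "z \<otimes> h = h \<otimes> z"
  using assms(4)
proof (induction rule: generate.induct)
  case one then show ?case using assms(1) by simp
next
  case (incl h) then show ?case using assms by blast
next
  case (inv h)
  then have h: "h \<in> carrier G" using assms(2) by blast
  have "inv h \<otimes> (z \<otimes> h) \<otimes> inv h = inv h \<otimes> (h \<otimes> z) \<otimes> inv h" using inv assms(3) by simp
  then show ?case using h assms(1) by (simp add: m_assoc cc1 cc2)
next
  case (eng h1 h2)
  have c: "h1 \<in> carrier G" "h2 \<in> carrier G"
    using eng(1,2) generate_in_carrier[OF assms(2)] by auto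
  have "z \<otimes> (h1 \<otimes> h2) = (h1 \<otimes> z) \<otimes> h2" using eng c assms(1) by (simp add: m_assoc[symmetric])
  also have "\<dots> = h1 \<otimes> h2 \<otimes> z" using eng c assms(1) by (simp add: m_assoc)
  finally show ?case .
qed

theorem lemma2p4:
  fixes K (structure) and m :: nat and y :: "nat \<Rightarrow> 'a" and r :: "nat \<Rightarrow> nat"
    and \<gamma> :: "nat \<Rightarrow> nat"
  assumes "group K"
    and "nilpotent_of_class K 3"
    and "m \<ge> 2"
    and "\<forall>i\<in>{1..m}. y i \<in> carrier K"
    and "generate K (y ` {1..m} \<union> center K) = carrier K"
    and "\<forall>i\<in>{1..m}. y i [^] ((2::nat) ^ r i) \<in> center K"
    and "\<forall>i\<in>{1..m}. 1 \<le> r i"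
    and "\<forall>i j. 1 \<le> i \<and> i \<le> j \<and> j \<le> m \<longrightarrow> r i \<le> r j"
    and "\<forall>i\<in>{1..m-1}. \<gamma> i < r (m - 1)"
    and "\<forall>i\<in>{1..m-1}.
           comm K (y m) (y i) [^] ((2::nat) ^ \<gamma> i) \<otimes> y i = y i \<otimes> comm K (y m) (y i) [^] ((2::nat) ^ \<gamma> i)
         \<and> comm K (y m) (y i) [^] ((2::nat) ^ \<gamma> i) \<otimes> y m = y m \<otimes> comm K (y m) (y i) [^] ((2::nat) ^ \<gamma> i)"
  shows "y m [^] ((2::nat) ^ r (m - 1)) \<in> center K"
proof -
  interpret group K by fact
  have lcs3: "lcs K 3 = {\<one>}" using assms(2) unfolding nilpotent_of_class_def by simp
  interpret class3 K
  proof
    fix x y z w assume xyzw: "x \<in> carrier K" "y \<in> carrier K" "z \<in> carrier K" "w \<in> carrier K"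
    have "comm K x y \<in> lcs K 1" using xyzw by (auto intro: generate.incl)
    then have "comm K (comm K x y) z \<in> lcs K 2" using xyzw
      by (auto simp: numeral_2_eq_2 intro: generate.incl)
    then have "comm K (comm K (comm K x y) z) w \<in> lcs K 3" using xyzw
      by (auto simp: numeral_3_eq_3 numeral_2_eq_2 intro: generate.incl)
    then show "comm K (comm K (comm K x y) z) w = \<one>" using lcs3 by simp
  qed
  have m: "m \<in> {1..m}" using assms(3) by simp
  have ym: "y m \<in> carrier K" using assms(4) m by blast
  let ?z = "y m [^] ((2::nat) ^ r (m - 1))"
  have zc: "?z \<in> carrier K" using ym by simp
  have S: "y ` {1..m} \<union> center K \<subseteq> carrier K" using assms(4) unfolding center_def by auto
  have comm_gen: "\<forall>s\<in>y ` {1..m} \<union> center K. ?z \<otimes> s = s \<otimes> ?z"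
  proof
    fix s assume s: "s \<in> y ` {1..m} \<union> center K"
    show "?z \<otimes> s = s \<otimes> ?z"
    proof (cases "s \<in> center K")
      case True then show ?thesis using zc unfolding center_def by auto
    next
      case False
      then obtain i where i: "i \<in> {1..m}" "s = y i" using s by auto
      show ?thesis
      proof (cases "i = m")
        case True then show ?thesis using i ym by (metis nat_pow_Suc nat_pow_Suc2)
      next
        case False
        then have i': "i \<in> {1..m-1}" using i by auto
        have yi: "y i \<in> carrier K" using assms(4) i by blast
        have cen: "\<forall>x\<in>carrier K. y i [^] ((2::nat) ^ r i) \<otimes> x = x \<otimes> y i [^] ((2::nat) ^ r i)"
          using assms(6) i unfolding center_def by auto
        have "?z \<otimes> y i = y i \<otimes> ?z"
          apply (rule key[OF yi ym cen])
          using assms(7,8,9,10) i i' by auto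
        then show ?thesis using i by simp
      qed
    qed
  qed
  have "\<forall>h\<in>carrier K. ?z \<otimes> h = h \<otimes> ?z"
    using gen_commute[OF zc S comm_gen] assms(5) by auto
  then show ?thesis using zc unfolding center_def by auto
qed
end
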